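(* Let $\mathcal{G}$ be a class of graphs closed under taking subgraphs. The following are equivalent: (i) there exists $d\in\mathbb{N}$ such that every graph $G\in\mathcal{G}$ is strongly $d$-degenerate; (ii) there exist $s\in\mathbb{N}$ and $k\in\mathbb{N}$ such that $K_{2,s}\notin\mathcal{G}$ and such that for every graph $H$ of minimum degree at least $k$, the $1$-subdivision of $H$ is not contained in $\mathcal{G}$.
   Context: All graphs are finite and simple. For an integer $d\ge1$, a vertex $v$ of a graph $G$ is $d$-removable in $G$ if $d_G(v)\le d$ and at most one neighbour $w$ of $v$ has $d_G(w)>d$. A graph $G$ is strongly $d$-degenerate if every non-empty subgraph $G'$ of $G$ contains a vertex which is $d$-removable in $G'$. The $1$-subdivision of $H$ is the graph obtained by replacing every edge of $H$ by a path of length $2$ through a new vertex. Membership in $\mathcal{G}$ is understood up to isomorphism. *)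

theory Defs
  imports Main
begin

text \<open>A finite simple graph on natural-number vertices: a pair (V, E) where V is a finite
  vertex set and E is a set of 2-element subsets of V.  Every finite graph is isomorphic to
  such a graph, and all notions below are invariant under isomorphism.\<close>

type_synonym graph = "nat set \<times> nat set set"

definition verts :: "graph \<Rightarrow> nat set" where "verts G = fst G"
definition edges :: "graph \<Rightarrow> nat set set" where "edges G = snd G"

definition wf_graph :: "graph \<Rightarrow> bool" where
  "wf_graph G \<longleftrightarrow> finite (verts G) \<and>
     (\<forall>e\<in>edges G. \<exists>u v. u \<noteq> v \<and> e = {u, v} \<and> u \<in> verts G \<and> v \<in> verts G)"

definition nbrs :: "graph \<Rightarrow> nat \<Rightarrow> nat set" where
  "nbrs G v = {u. {v, u} \<in> edges G}"

definition degree :: "graph \<Rightarrow> nat \<Rightarrow> nat" where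
  "degree G v = card (nbrs G v)"

definition subgraph :: "graph \<Rightarrow> graph \<Rightarrow> bool" where
  "subgraph H G \<longleftrightarrow> wf_graph H \<and> verts H \<subseteq> verts G \<and> edges H \<subseteq> edges G"

definition graph_iso :: "graph \<Rightarrow> graph \<Rightarrow> bool" where
  "graph_iso G H \<longleftrightarrow> (\<exists>f. bij_betw f (verts G) (verts H) \<and>
      (\<forall>u\<in>verts G. \<forall>v\<in>verts G. {u, v} \<in> edges G \<longleftrightarrow> {f u, f v} \<in> edges H))"

definition removable :: "nat \<Rightarrow> graph \<Rightarrow> nat \<Rightarrow> bool" where
  "removable d G v \<longleftrightarrow> v \<in> verts G \<and> degree G v \<le> d \<and>
     card {w \<in> nbrs G v. degree G w > d} \<le> 1"

definition strongly_degenerate :: "nat \<Rightarrow> graph \<Rightarrow> bool" where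
  "strongly_degenerate d G \<longleftrightarrow>
     (\<forall>G'. subgraph G' G \<and> verts G' \<noteq> {} \<longrightarrow> (\<exists>v\<in>verts G'. removable d G' v))"

definition is_K2s :: "nat \<Rightarrow> graph \<Rightarrow> bool" where
  "is_K2s s G \<longleftrightarrow> (\<exists>A B. verts G = A \<union> B \<and> A \<inter> B = {} \<and> card A = 2 \<and> finite B \<and>
      card B = s \<and> edges G = {{a, b} | a b. a \<in> A \<and> b \<in> B})"

definition is_subdivision_of :: "graph \<Rightarrow> graph \<Rightarrow> bool" where
  "is_subdivision_of S H \<longleftrightarrow> (\<exists>f g. inj_on f (verts H) \<and> inj_on g (edges H) \<and>
      f ` verts H \<inter> g ` edges H = {} \<and> verts S = f ` verts H \<union> g ` edges H \<and>
      edges S = {{f u, g e} | u e. e \<in> edges H \<and> u \<in> e})"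

definition min_degree_at_least :: "nat \<Rightarrow> graph \<Rightarrow> bool" where
  "min_degree_at_least k H \<longleftrightarrow> verts H \<noteq> {} \<and> (\<forall>v\<in>verts H. degree H v \<ge> k)"

definition subgraph_closed :: "graph set \<Rightarrow> bool" where
  "subgraph_closed \<G> \<longleftrightarrow> (\<forall>G\<in>\<G>. wf_graph G) \<and>
     (\<forall>G\<in>\<G>. \<forall>G'. subgraph G' G \<longrightarrow> (\<exists>G''\<in>\<G>. graph_iso G' G''))"

end

theory Submission
  imports Defs Complex_Main
begin


lemma verts_pair[simp]: "verts (a, b) = a" by (simp add: verts_def)
lemma edges_pair[simp]: "edges (a, b) = b" by (simp add: edges_def)

lemma nbrs_sym: "u \<in> nbrs G v \<longleftrightarrow> v \<in> nbrs G u"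
  by (simp add: nbrs_def insert_commute)

lemma wf_nbrs_sub: "wf_graph G \<Longrightarrow> nbrs G v \<subseteq> verts G"
  unfolding wf_graph_def nbrs_def by (auto simp: doubleton_eq_iff)

lemma wf_nbrs_finite: "wf_graph G \<Longrightarrow> finite (nbrs G v)"
  using wf_nbrs_sub finite_subset wf_graph_def by metis

lemma wf_not_self: "wf_graph G \<Longrightarrow> v \<notin> nbrs G v"
  unfolding wf_graph_def nbrs_def by (auto simp: doubleton_eq_iff)

lemma wf_edges_sub: "wf_graph G \<Longrightarrow> edges G \<subseteq> Pow (verts G)"
  unfolding wf_graph_def by auto

lemma wf_edges_finite: "wf_graph G \<Longrightarrow> finite (edges G)"
  using wf_edges_sub finite_subset wf_graph_def by (metis finite_Pow_iff)

lemma subgraph_trans: "subgraph A B \<Longrightarrow> subgraph B C \<Longrightarrow> subgraph A C"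
  unfolding subgraph_def by auto

lemma subgraph_refl: "wf_graph G \<Longrightarrow> subgraph G G"
  unfolding subgraph_def by auto

lemma degenerate_lemma:
  "wf_graph H \<Longrightarrow> k * card (verts H) < card (edges H) \<Longrightarrow>
     \<exists>H'. subgraph H' H \<and> min_degree_at_least k H'"
proof (induction "card (verts H)" arbitrary: H rule: less_induct)
  case less
  show ?case
  proof (cases "min_degree_at_least k H")
    case True
    then show ?thesis using subgraph_refl less.prems by blast
  next
    case False
    have "verts H \<noteq> {}"
    proof
      assume "verts H = {}"
      then have "edges H = {}" using less.prems(1) unfolding wf_graph_def by auto
      then show False using less.prems(2) by simp
    qed
    with False obtain v where v: "v \<in> verts H" "degree H v < k"
      unfolding min_degree_at_least_def by (meson not_le)
    define H1 where "H1 = (verts H - {v}, {e \<in> edges H. v \<notin> e})"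
    have fin: "finite (verts H)" using less.prems(1) wf_graph_def by blast
    have wf1: "wf_graph H1" using less.prems(1) unfolding H1_def wf_graph_def verts_def edges_def
      by fastforce
    have sub1: "subgraph H1 H" using wf1 unfolding subgraph_def H1_def verts_def edges_def by auto
    have cv: "card (verts H1) + 1 = card (verts H)"
      using v fin unfolding H1_def verts_def by (simp add: card_Diff_singleton card_gt_0_iff[symmetric])
        (metis Suc_pred card_gt_0_iff equals0D)
    have "{e \<in> edges H. v \<in> e} \<subseteq> (\<lambda>u. {v,u}) ` nbrs H v"
    proof
      fix e assume "e \<in> {e \<in> edges H. v \<in> e}"
      then have e: "e \<in> edges H" "v \<in> e" by auto
      then obtain a b where "a \<noteq> b" "e = {a,b}" using less.prems(1) unfolding wf_graph_def by blast
      then show "e \<in> (\<lambda>u. {v,u}) ` nbrs H v" using e unfolding nbrs_def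
        by (auto simp: insert_commute)
    qed
    then have c1: "card {e \<in> edges H. v \<in> e} \<le> degree H v"
      unfolding degree_def
      by (meson card_image_le card_mono finite_imageI less.prems(1) order_trans wf_nbrs_finite)
    have "edges H = edges H1 \<union> {e \<in> edges H. v \<in> e}" unfolding H1_def edges_def by auto
    then have "card (edges H) \<le> card (edges H1) + card {e \<in> edges H. v \<in> e}"
      by (metis card_Un_le)
    moreover have "k * card (verts H) = k * card (verts H1) + k" using cv
      by (metis add_mult_distrib2 mult_1_right)
    ultimately have "k * card (verts H1) < card (edges H1)"
      using c1 v(2) less.prems(2) by linarith
    then obtain H' where "subgraph H' H1" "min_degree_at_least k H'"
      using less.hyps[of H1] cv wf1 by auto
    then show ?thesis using sub1 subgraph_trans by blast
  qed
qed



lemma main_lemma: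
  fixes G :: graph and X Y :: "nat set"
  assumes wf: "wf_graph G" and XV: "X \<subseteq> verts G" and YV: "Y \<subseteq> verts G"
    and XY: "X \<inter> Y = {}" and two: "\<forall>y\<in>Y. 2 \<le> card (nbrs G y \<inter> X)"
    and big: "(s - 1) * k * card X < card Y"
  shows "(\<exists>K. subgraph K G \<and> is_K2s s K) \<or>
         (\<exists>H S. wf_graph H \<and> min_degree_at_least k H \<and> is_subdivision_of S H \<and> subgraph S G)"
proof -
  have finV: "finite (verts G)" using wf wf_graph_def by blast
  have finX: "finite X" "finite Y" using XV YV finV finite_subset by auto
  have "\<forall>y\<in>Y. \<exists>P. P \<subseteq> nbrs G y \<inter> X \<and> card P = 2"
    using two by (meson obtain_subset_with_card_n)
  then obtain p where p: "\<And>y. y \<in> Y \<Longrightarrow> p y \<subseteq> nbrs G y \<inter> X \<and> card (p y) = 2"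
    by metis
  have padj: "{y, a} \<in> edges G" if "y \<in> Y" "a \<in> p y" for y a
    using p[OF that(1)] that(2) unfolding nbrs_def by auto
  show ?thesis
  proof (cases "\<exists>e\<in>p ` Y. s \<le> card {y \<in> Y. p y = e}")
    case True
    then obtain y0 where y0: "y0 \<in> Y" "s \<le> card {y \<in> Y. p y = p y0}" by auto
    then obtain T where T: "T \<subseteq> {y \<in> Y. p y = p y0}" "card T = s"
      by (meson obtain_subset_with_card_n)
    define e where "e = p y0"
    have finT: "finite T" using T finX(2) finite_subset by fastforce
    have eX: "e \<subseteq> X" using p[OF y0(1)] e_def by auto
    have ce: "card e = 2" using p[OF y0(1)] e_def by auto
    define K where "K = (e \<union> T, {{a, b} | a b. a \<in> e \<and> b \<in> T})"
    have "is_K2s s K" unfolding is_K2s_def K_def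
      using T eX XY ce finT by (intro exI[of _ e] exI[of _ T]) auto
    moreover have "subgraph K G"
      unfolding subgraph_def
    proof (intro conjI)
      have fe: "finite e" using ce by (intro card_ge_0_finite) simp
      have ne: "a \<noteq> b" if "a \<in> e" "b \<in> T" for a b using that eX T XY by auto
      show "wf_graph K" unfolding wf_graph_def K_def
        using finT fe ne by auto
      have "verts K = e \<union> T" unfolding K_def by simp
      then show "verts K \<subseteq> verts G" using eX XV T YV by auto
      have "edges K = {{a, b} | a b. a \<in> e \<and> b \<in> T}" unfolding K_def by simp
      then show "edges K \<subseteq> edges G"
      proof (clarsimp)
        fix a b assume "a \<in> e" "b \<in> T"
        then have "b \<in> Y" "a \<in> p b" using T e_def by auto
        then show "{a, b} \<in> edges G" using padj[of b a] by (simp add: insert_commute)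
      qed
    qed
    ultimately show ?thesis by blast
  next
    case False
    define H where "H = (X, p ` Y)"
    have HV: "verts H = X" "edges H = p ` Y" unfolding H_def by simp_all
    have wfH: "wf_graph H" unfolding wf_graph_def HV
    proof (intro conjI ballI)
      show "finite X" by (rule finX)
      fix e assume "e \<in> p ` Y"
      then obtain y where y: "y \<in> Y" "e = p y" by auto
      then obtain a b where "a \<noteq> b" "e = {a,b}" using p[OF y(1)] by (meson card_2_iff)
      then show "\<exists>u v. u \<noteq> v \<and> e = {u, v} \<and> u \<in> X \<and> v \<in> X" using p[OF y(1)] y by auto
    qed
    have fib: "card {y \<in> Y. p y = e} \<le> s - 1" if "e \<in> p ` Y" for e
      using False that by auto
    have "card Y = (\<Sum>e\<in>p ` Y. card {y \<in> Y. p y = e})"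
      using sum.image_gen[OF finX(2), of "\<lambda>_. (1::nat)" p] by simp
    also have "\<dots> \<le> (\<Sum>e\<in>p ` Y. s - 1)" by (rule sum_mono) (use fib in auto)
    also have "\<dots> = (s - 1) * card (p ` Y)" by simp
    finally have "(s - 1) * k * card X < (s - 1) * card (p ` Y)" using big by linarith
    then have kc: "k * card X < card (p ` Y)"
      by (metis mult.assoc nat_mult_less_cancel_disj)
    obtain H' where H': "subgraph H' H" "min_degree_at_least k H'"
    proof -
      show ?thesis using degenerate_lemma[OF wfH] that kc HV by metis
    qed
    have wfH': "wf_graph H'" using H' subgraph_def by blast
    have H'X: "verts H' \<subseteq> X" and H'E: "edges H' \<subseteq> p ` Y"
      using H'(1) HV unfolding subgraph_def by auto
    define g where "g e = (SOME y. y \<in> Y \<and> p y = e)" for e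
    have g: "g e \<in> Y \<and> p (g e) = e" if "e \<in> p ` Y" for e
    proof -
      have "\<exists>y. y \<in> Y \<and> p y = e" using that by auto
      then show ?thesis unfolding g_def by (rule someI_ex)
    qed
    have gE: "\<forall>e\<in>edges H'. g e \<in> Y \<and> p (g e) = e" using g H'E by blast
    define S where "S = (verts H' \<union> g ` edges H', {{u, g e} | u e. e \<in> edges H' \<and> u \<in> e})"
    have "is_subdivision_of S H'"
      unfolding is_subdivision_of_def
    proof (intro exI[of _ "\<lambda>x. x"] exI[of _ g] conjI)
      show "inj_on (\<lambda>x. x) (verts H')" by simp
      show "inj_on g (edges H')"
      proof (rule inj_onI)
        fix a b assume ab: "a \<in> edges H'" "b \<in> edges H'" "g a = g b"
        have 1: "p (g a) = a" using gE ab(1) by blast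
        have 2: "p (g b) = b" using gE ab(2) by blast
        show "a = b" using 1 2 ab(3) by metis
      qed
      show "(\<lambda>x. x) ` verts H' \<inter> g ` edges H' = {}" using gE H'X XY by auto
      show "verts S = (\<lambda>x. x) ` verts H' \<union> g ` edges H'" unfolding S_def by simp
      show "edges S = {{u, g e} | u e. e \<in> edges H' \<and> u \<in> e}" unfolding S_def by simp
    qed
    moreover have "subgraph S G"
      unfolding subgraph_def
    proof (intro conjI)
      have fE: "finite (edges H')" using wfH' wf_edges_finite by blast
      have eV: "e \<subseteq> verts H'" if "e \<in> edges H'" for e
        using wf_edges_sub[OF wfH'] that by auto
      show "wf_graph S" unfolding wf_graph_def
      proof (intro conjI ballI)
        show "finite (verts S)" unfolding S_def using fE wfH' wf_graph_def by auto
        fix x assume "x \<in> edges S"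
        then obtain u e where ue: "x = {u, g e}" "e \<in> edges H'" "u \<in> e"
          unfolding S_def by auto
        have "u \<noteq> g e" using ue eV H'X gE XY by blast
        moreover have "u \<in> verts S" "g e \<in> verts S" using ue eV unfolding S_def by auto
        ultimately show "\<exists>u v. u \<noteq> v \<and> x = {u, v} \<and> u \<in> verts S \<and> v \<in> verts S"
          using ue by blast
      qed
      have "verts S = verts H' \<union> g ` edges H'" unfolding S_def by simp
      then show "verts S \<subseteq> verts G" using H'X XV gE YV by auto
      have "edges S = {{u, g e} | u e. e \<in> edges H' \<and> u \<in> e}" unfolding S_def by simp
      then show "edges S \<subseteq> edges G"
      proof (clarsimp)
        fix u e assume ue: "e \<in> edges H'" "u \<in> e"
        then have "g e \<in> Y" "u \<in> p (g e)" using gE by auto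
        then show "{u, g e} \<in> edges G" using padj[of "g e" u] by (simp add: insert_commute)
      qed
    qed
    ultimately show ?thesis using wfH' H'(2) by blast
  qed
qed



lemma card_filter_sum: "finite A \<Longrightarrow> card {x\<in>A. P x} = (\<Sum>x\<in>A. if P x then 1 else (0::nat))"
  by (simp add: sum.inter_filter[symmetric])

lemma greedy_step:
  assumes fU: "finite U" and fR: "finite R" and Rne: "R \<noteq> {}" and D1: "1 \<le> D"
    and deg: "\<forall>w\<in>R. D \<le> card (nbrs G w \<inter> U)"
  shows "\<exists>u\<in>U. card R * D \<le> card {w\<in>R. u \<in> nbrs G w} * card U"
proof (rule ccontr)
  assume "\<not> ?thesis"
  then have lt: "\<forall>u\<in>U. card {w\<in>R. u \<in> nbrs G w} * card U < card R * D" by (simp add: not_le)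
  obtain w0 where w0: "w0 \<in> R" using Rne by auto
  then have "nbrs G w0 \<inter> U \<noteq> {}" using deg D1 by (metis card.empty le_zero_eq not_one_le_zero)
  then have Une: "U \<noteq> {}" by auto
  have "(\<Sum>u\<in>U. card {w\<in>R. u \<in> nbrs G w}) = (\<Sum>u\<in>U. \<Sum>w\<in>R. if u \<in> nbrs G w then 1 else (0::nat))"
    using fR by (simp add: card_filter_sum)
  also have "\<dots> = (\<Sum>w\<in>R. \<Sum>u\<in>U. if u \<in> nbrs G w then 1 else (0::nat))"
    by (rule sum.swap)
  also have "\<dots> = (\<Sum>w\<in>R. card {u\<in>U. u \<in> nbrs G w})"
    using fU by (simp add: card_filter_sum)
  also have "\<dots> = (\<Sum>w\<in>R. card (nbrs G w \<inter> U))"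
    by (rule sum.cong) (auto intro: arg_cong[where f=card])
  also have "\<dots> \<ge> (\<Sum>w\<in>R. D)" using deg by (intro sum_mono) auto
  finally have s1: "card R * D \<le> (\<Sum>u\<in>U. card {w\<in>R. u \<in> nbrs G w})" by simp
  have "(\<Sum>u\<in>U. card {w\<in>R. u \<in> nbrs G w} * card U) < (\<Sum>u\<in>U. card R * D)"
    using lt Une fU by (intro sum_strict_mono) auto
  then have "(\<Sum>u\<in>U. card {w\<in>R. u \<in> nbrs G w}) * card U < card U * (card R * D)"
    by (simp add: sum_distrib_right)
  then have "(\<Sum>u\<in>U. card {w\<in>R. u \<in> nbrs G w}) < card R * D"
    by (simp add: mult.commute)
  with s1 show False by simp
qed

lemma greedy_iter:
  assumes fU: "finite U" and D1: "1 \<le> D"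
  shows "finite R \<Longrightarrow> (\<forall>w\<in>R. D \<le> card (nbrs G w \<inter> U)) \<Longrightarrow>
    \<exists>X\<subseteq>U. card X \<le> t \<and>
      real (card {w\<in>R. nbrs G w \<inter> X = {}}) * (real (card U) + real t * real D)
        \<le> real (card R) * real (card U)"
proof (induction t arbitrary: R)
  case 0
  then show ?case by (intro exI[of _ "{}"]) auto
next
  case (Suc t)
  show ?case
  proof (cases "R = {}")
    case True
    then show ?thesis by (intro exI[of _ "{}"]) auto
  next
    case False
    obtain u where u: "u \<in> U" "card R * D \<le> card {w\<in>R. u \<in> nbrs G w} * card U"
      using greedy_step[OF fU Suc.prems(1) False D1 Suc.prems(2)] by blast
    define R' where "R' = {w\<in>R. u \<notin> nbrs G w}"
    define C where "C = {w\<in>R. u \<in> nbrs G w}"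
    have fR': "finite R'" using Suc.prems(1) R'_def by simp
    have "\<forall>w\<in>R'. D \<le> card (nbrs G w \<inter> U)" using Suc.prems(2) R'_def by simp
    then obtain X' where X': "X' \<subseteq> U" "card X' \<le> t"
      "real (card {w\<in>R'. nbrs G w \<inter> X' = {}}) * (real (card U) + real t * real D)
        \<le> real (card R') * real (card U)"
      using Suc.IH[OF fR'] by blast
    define X where "X = insert u X'"
    have XU: "X \<subseteq> U" using X' u X_def by auto
    have fX': "finite X'" using X'(1) fU finite_subset by blast
    have cX: "card X \<le> Suc t" using X'(2) fX' X_def by (simp add: card_insert_if)
    have und: "{w\<in>R. nbrs G w \<inter> X = {}} = {w\<in>R'. nbrs G w \<inter> X' = {}}"
      unfolding X_def R'_def by auto
    have "R = R' \<union> C" "R' \<inter> C = {}" unfolding R'_def C_def by auto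
    then have cR: "card R = card R' + card C" using Suc.prems(1)
      by (metis card_Un_disjoint finite_Un)
    define a where "a = real (card {w\<in>R'. nbrs G w \<inter> X' = {}})"
    define N where "N = real (card U)"
    define r where "r = real (card R)"
    define Q where "Q = N + real t * real D"
    have Npos: "N > 0" unfolding N_def using u fU card_gt_0_iff by fastforce
    have a0: "a \<ge> 0" "r \<ge> 0" unfolding a_def r_def by auto
    have h0: "r * real D \<le> real (card C) * N" using u(2) unfolding r_def N_def C_def
      by (metis of_nat_le_iff of_nat_mult)
    have h1: "a * Q \<le> r * (N - real D)"
    proof -
      have "a * Q \<le> real (card R') * N" using X'(3) unfolding a_def Q_def N_def .
      also have "\<dots> = (r - real (card C)) * N" using cR unfolding r_def by simp
      also have "\<dots> \<le> r * (N - real D)" using h0 by (simp add: algebra_simps)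
      finally show ?thesis .
    qed
    have Qpos: "Q > 0" unfolding Q_def using Npos by (intro add_pos_nonneg) auto
    have h2: "(N - real D) * (Q + real D) \<le> N * Q"
    proof -
      have "(N - real D) * (Q + real D) = N * Q - real D * (real t * real D) - real D * real D"
        unfolding Q_def by (simp add: algebra_simps)
      also have "\<dots> \<le> N * Q"
      proof -
        have "0 \<le> real D * (real t * real D)" by simp
        moreover have "0 \<le> real D * real D" by simp
        ultimately show ?thesis by linarith
      qed
      finally show ?thesis .
    qed
    have "a * (Q + real D) * Q = (a * Q) * (Q + real D)" by (simp add: algebra_simps)
    also have "\<dots> \<le> (r * (N - real D)) * (Q + real D)"
      using h1 Qpos by (intro mult_right_mono) auto
    also have "\<dots> = r * ((N - real D) * (Q + real D))" by (simp add: algebra_simps)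
    also have "\<dots> \<le> r * (N * Q)" using h2 a0 by (intro mult_left_mono) auto
    finally have "a * (Q + real D) * Q \<le> (r * N) * Q" by (simp add: algebra_simps)
    then have fin: "a * (Q + real D) \<le> r * N" using Qpos by simp
    show ?thesis
    proof (intro exI[of _ X] conjI XU cX)
      show "real (card {w\<in>R. nbrs G w \<inter> X = {}}) * (real (card U) + real (Suc t) * real D)
        \<le> real (card R) * real (card U)"
        using fin unfolding und a_def Q_def r_def N_def by (simp add: algebra_simps)
    qed
  qed
qed

lemma one_dom:
  assumes fU: "finite U" and D1: "1 \<le> D" and fW: "finite W"
    and deg: "\<forall>w\<in>W. D \<le> card (nbrs G w \<inter> U)" and t1: "1 \<le> t"
  shows "\<exists>X\<subseteq>U. real (card X) \<le> real t + real (card W) * real (card U) / (real t * real D)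
           \<and> (\<forall>w\<in>W. nbrs G w \<inter> X \<noteq> {})"
proof -
  obtain X0 where X0: "X0 \<subseteq> U" "card X0 \<le> t"
    "real (card {w\<in>W. nbrs G w \<inter> X0 = {}}) * (real (card U) + real t * real D)
        \<le> real (card W) * real (card U)"
    using greedy_iter[OF fU D1 fW deg] by blast
  define Ru where "Ru = {w\<in>W. nbrs G w \<inter> X0 = {}}"
  have ex: "\<forall>w\<in>Ru. \<exists>u. u \<in> nbrs G w \<inter> U"
  proof
    fix w assume "w \<in> Ru"
    then have "D \<le> card (nbrs G w \<inter> U)" using deg Ru_def by auto
    then show "\<exists>u. u \<in> nbrs G w \<inter> U" using D1 by (metis card.empty ex_in_conv le_zero_eq not_one_le_zero)
  qed
  then obtain h where h: "\<And>w. w \<in> Ru \<Longrightarrow> h w \<in> nbrs G w \<inter> U" by metis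
  define X where "X = X0 \<union> h ` Ru"
  have XU: "X \<subseteq> U" using X0(1) h X_def by auto
  have fRu: "finite Ru" using fW Ru_def by simp
  have fX0: "finite X0" using X0(1) fU finite_subset by blast
  have "card X \<le> card X0 + card (h ` Ru)" unfolding X_def by (rule card_Un_le)
  also have "\<dots> \<le> t + card Ru" using X0(2) card_image_le[OF fRu, of h] by linarith
  finally have cX: "real (card X) \<le> real t + real (card Ru)" by linarith
  have tD: "real t * real D > 0" using t1 D1 by simp
  have "real (card Ru) * (real t * real D) \<le> real (card Ru) * (real (card U) + real t * real D)"
    by (intro mult_left_mono) auto
  also have "\<dots> \<le> real (card W) * real (card U)" using X0(3) unfolding Ru_def .
  finally have "real (card Ru) \<le> real (card W) * real (card U) / (real t * real D)"
    using tD by (simp add: pos_le_divide_eq)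
  then have "real (card X) \<le> real t + real (card W) * real (card U) / (real t * real D)"
    using cX by linarith
  moreover have "\<forall>w\<in>W. nbrs G w \<inter> X \<noteq> {}"
  proof
    fix w assume w: "w \<in> W"
    show "nbrs G w \<inter> X \<noteq> {}"
    proof (cases "w \<in> Ru")
      case True
      then show ?thesis using h[OF True] X_def by auto
    next
      case False
      then show ?thesis using w Ru_def X_def by auto
    qed
  qed
  ultimately show ?thesis using XU by blast
qed



lemma two_dom:
  assumes fU: "finite U" and fW: "finite W" and D2: "2 \<le> D"
    and deg: "\<forall>w\<in>W. D \<le> card (nbrs G w \<inter> U)" and t1: "1 \<le> t"
  shows "\<exists>X\<subseteq>U. real (card X) \<le> 2 * real t + 2 * (real (card W) * real (card U) / (real t * real (D - 1)))
           \<and> (\<forall>w\<in>W. 2 \<le> card (nbrs G w \<inter> X))"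
proof -
  define F where "F = real (card W) * real (card U) / (real t * real (D - 1))"
  have D1: "1 \<le> D" using D2 by simp
  obtain X1 where X1: "X1 \<subseteq> U" "real (card X1) \<le> real t + real (card W) * real (card U) / (real t * real D)"
    "\<forall>w\<in>W. nbrs G w \<inter> X1 \<noteq> {}"
    using one_dom[OF fU D1 fW deg t1] by blast
  have "real (card W) * real (card U) / (real t * real D) \<le> F"
    unfolding F_def using t1 D2 by (intro divide_left_mono) auto
  with X1(2) have b1: "real (card X1) \<le> real t + F" by linarith
  define U2 where "U2 = U - X1"
  define W2 where "W2 = {w\<in>W. card (nbrs G w \<inter> X1) \<le> 1}"
  have fU2: "finite U2" using fU U2_def by simp
  have fW2: "finite W2" using fW W2_def by simp
  have deg2: "\<forall>w\<in>W2. D - 1 \<le> card (nbrs G w \<inter> U2)"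
  proof
    fix w assume w: "w \<in> W2"
    have "nbrs G w \<inter> U \<subseteq> (nbrs G w \<inter> U2) \<union> (nbrs G w \<inter> X1)" unfolding U2_def by auto
    then have "card (nbrs G w \<inter> U) \<le> card ((nbrs G w \<inter> U2) \<union> (nbrs G w \<inter> X1))"
      using fU fU2 X1(1) by (intro card_mono) (auto intro: finite_subset)
    also have "\<dots> \<le> card (nbrs G w \<inter> U2) + card (nbrs G w \<inter> X1)" by (rule card_Un_le)
    finally show "D - 1 \<le> card (nbrs G w \<inter> U2)" using w deg W2_def by auto
  qed
  have D1': "1 \<le> D - 1" using D2 by simp
  obtain X2 where X2: "X2 \<subseteq> U2" "real (card X2) \<le> real t + real (card W2) * real (card U2) / (real t * real (D - 1))"
    "\<forall>w\<in>W2. nbrs G w \<inter> X2 \<noteq> {}"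
    using one_dom[OF fU2 D1' fW2 deg2 t1] by blast
  have "card W2 * card U2 \<le> card W * card U"
    using fU fW by (intro mult_le_mono card_mono) (auto simp: W2_def U2_def)
  then have "real (card W2) * real (card U2) \<le> real (card W) * real (card U)"
    by (metis of_nat_le_iff of_nat_mult)
  then have "real (card W2) * real (card U2) / (real t * real (D - 1)) \<le> F"
    unfolding F_def using t1 D2 by (intro divide_right_mono) auto
  with X2(2) have b2: "real (card X2) \<le> real t + F" by (meson add_left_mono order_trans)
  define X where "X = X1 \<union> X2"
  have XU: "X \<subseteq> U" using X1(1) X2(1) U2_def X_def by auto
  have fX: "finite X" using XU fU finite_subset by blast
  have "card X \<le> card X1 + card X2" unfolding X_def by (rule card_Un_le)
  then have cX: "real (card X) \<le> 2 * real t + 2 * F" using b1 b2 by linarith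
  have dom: "\<forall>w\<in>W. 2 \<le> card (nbrs G w \<inter> X)"
  proof
    fix w assume w: "w \<in> W"
    show "2 \<le> card (nbrs G w \<inter> X)"
    proof (cases "2 \<le> card (nbrs G w \<inter> X1)")
      case True
      have "card (nbrs G w \<inter> X1) \<le> card (nbrs G w \<inter> X)"
        using fX by (intro card_mono) (auto simp: X_def)
      then show ?thesis using True by linarith
    next
      case False
      then have "w \<in> W2" using w W2_def by auto
      then obtain b where b: "b \<in> nbrs G w \<inter> X2" using X2(3) by blast
      obtain a where a: "a \<in> nbrs G w \<inter> X1" using X1(3) w by blast
      have "a \<noteq> b" using a b X2(1) U2_def by auto
      moreover have "{a, b} \<subseteq> nbrs G w \<inter> X" using a b X_def by auto
      ultimately have "card {a, b} \<le> card (nbrs G w \<inter> X)"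
        using fX by (intro card_mono) auto
      then show ?thesis using \<open>a \<noteq> b\<close> by simp
    qed
  qed
  show ?thesis using XU cX dom unfolding F_def by blast
qed



lemma core:
  fixes G :: graph
  assumes wf: "wf_graph G" and ne: "verts G \<noteq> {}"
    and nr: "\<forall>v\<in>verts G. \<not> removable d G v"
    and Mdef: "M = s * k + 2" and dd: "d = 32 * M^3 + 4 * M^2"
  shows "(\<exists>K. subgraph K G \<and> is_K2s s K) \<or>
         (\<exists>H S. wf_graph H \<and> min_degree_at_least k H \<and> is_subdivision_of S H \<and> subgraph S G)"
proof -
  define V where "V = verts G"
  define B where "B = {v\<in>V. d < degree G v}"
  define L where "L = V - B"
  define c where "c = s * k + 1"
  have fV: "finite V" using wf wf_graph_def V_def by blast
  have BV: "B \<subseteq> V" and LV: "L \<subseteq> V" and BL: "B \<inter> L = {}" unfolding B_def L_def by auto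
  have fB: "finite B" using BV fV finite_subset by blast
  have nV: "nbrs G v \<subseteq> V" for v using wf_nbrs_sub[OF wf] V_def by simp
  have degeq: "degree G v = card (nbrs G v \<inter> V)" for v
    using nV unfolding degree_def by (metis inf.absorb1)
  have low: "\<forall>v\<in>L. 2 \<le> card (nbrs G v \<inter> B)"
  proof
    fix v assume v: "v \<in> L"
    then have vV: "v \<in> V" and dv: "degree G v \<le> d" unfolding L_def B_def by auto
    then have "\<not> card {w \<in> nbrs G v. degree G w > d} \<le> 1"
      using nr V_def unfolding removable_def by auto
    moreover have "{w \<in> nbrs G v. degree G w > d} = nbrs G v \<inter> B"
      using nV unfolding B_def by auto
    ultimately show "2 \<le> card (nbrs G v \<inter> B)" by simp
  qed
  have Bne: "B \<noteq> {}"
  proof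
    assume B0: "B = {}"
    obtain v where "v \<in> V" using ne V_def by auto
    then have "v \<in> L" using B0 L_def by auto
    then show False using low B0 by auto
  qed
  have cB: "0 < card B" using Bne fB by (simp add: card_gt_0_iff)
  have cVBL: "card V = card B + card L" unfolding L_def using fV BV
    by (metis card_Diff_subset card_mono diff_add_inverse le_add_diff_inverse finite_subset)
  have M1: "M = c + 1" using Mdef c_def by simp
  have skc: "(s - 1) * k < c" unfolding c_def
    by (metis diff_le_self le_imp_less_Suc mult_le_mono1 Suc_eq_plus1)
  show ?thesis
  proof (cases "c * card B \<le> card L")
    case True
    have "(s - 1) * k * card B < c * card B" using skc cB by simp
    then have "(s - 1) * k * card B < card L" using True by linarith
    then show ?thesis
      using main_lemma[OF wf, of B L s k] BV LV BL low V_def by blast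
  next
    case False
    then have cL: "card L < c * card B" by simp
    have VMB: "card V < M * card B" using cVBL cL M1 by simp
    obtain b where b: "b \<in> B" using Bne by auto
    have "insert b (nbrs G b) \<subseteq> V" using nV b BV by auto
    moreover have "b \<notin> nbrs G b" using wf_not_self[OF wf] .
    ultimately have "card (nbrs G b) + 1 \<le> card V"
      using fV wf_nbrs_finite[OF wf]
      by (metis Suc_eq_plus1 card_insert_disjoint card_mono)
    moreover have "d < card (nbrs G b)" using b unfolding B_def degree_def by simp
    ultimately have dV: "d + 2 \<le> card V" by linarith
    have Mpos: "M > 0" using Mdef by simp
    have "M * (4 * M) < M * card B"
    proof -
      have "M * (4 * M) = 4 * M^2" by (simp add: power2_eq_square)
      also have "\<dots> \<le> d" using dd by simp
      finally show ?thesis using dV VMB by linarith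
    qed
    then have B4M: "4 * M < card B" using Mpos by simp
    define t where "t = card B div (4 * M)"
    have t1: "1 \<le> t" unfolding t_def using B4M Mpos
      by (simp add: div_greater_zero_iff Suc_le_eq)
    have t4: "t * (4 * M) \<le> card B" unfolding t_def by (rule div_times_less_eq_dividend)
    have t8: "card B < 4 * M * (t + 1)" unfolding t_def using Mpos
      by (metis add.commute dividend_less_div_times mult.commute mult_pos_pos zero_less_numeral
          Nat.add_0_right le_div_geq less_add_one mult_Suc_right nat_neq_iff not_less_eq
          Suc_eq_plus1)
    have "4 * M * 1 \<le> 4 * M * t" using t1 by (intro mult_le_mono2)
    moreover have "4 * M * (t + 1) = 4 * M * t + 4 * M" by (simp add: algebra_simps)
    moreover have "8 * M * t = 4 * M * t + 4 * M * t" by simp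
    ultimately have B8: "card B \<le> 8 * M * t" using t8 by linarith
    have V8: "card V \<le> 8 * M * M * t"
    proof -
      have "card V \<le> M * card B" using VMB by simp
      also have "\<dots> \<le> M * (8 * M * t)" using B8 by simp
      finally show ?thesis by (simp add: algebra_simps)
    qed
    have dt: "4 * M * card V \<le> d * t"
    proof -
      have "4 * M * card V \<le> 4 * M * (8 * M * M * t)" using V8 by simp
      also have "\<dots> = 32 * M^3 * t" by (simp add: power3_eq_cube algebra_simps)
      also have "\<dots> \<le> d * t" using dd by simp
      finally show ?thesis .
    qed
    have degB: "\<forall>w\<in>B. d + 1 \<le> card (nbrs G w \<inter> V)" using degeq B_def by auto
    have "0 < M^2" using Mpos by simp
    then have D2: "2 \<le> d + 1" using dd by linarith
    obtain X where X: "X \<subseteq> V"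
      "real (card X) \<le> 2 * real t + 2 * (real (card B) * real (card V) / (real t * real (d + 1 - 1)))"
      "\<forall>w\<in>B. 2 \<le> card (nbrs G w \<inter> X)"
      using two_dom[OF fV fB D2 degB t1] by blast
    define F where "F = real (card B) * real (card V) / (real t * real d)"
    have cX: "real (card X) \<le> 2 * real t + 2 * F" using X(2) unfolding F_def by simp
    have "d > 0" using D2 dd \<open>0 < M^2\<close> by linarith
    then have tdpos: "real t * real d > 0" using t1 by simp
    have "real (4 * M * card V) * real (card B) \<le> real (d * t) * real (card B)"
    proof -
      have dtr: "real (4 * M * card V) \<le> real (d * t)" using dt by (simp only: of_nat_le_iff)
      show ?thesis by (rule mult_right_mono[OF dtr]) simp
    qed
    then have "4 * real M * (real (card B) * real (card V)) \<le> real (card B) * (real t * real d)"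
      by (simp add: algebra_simps)
    then have "4 * real M * F \<le> real (card B)"
      unfolding F_def using tdpos by (simp add: pos_divide_le_eq mult.assoc)
    moreover have "4 * real M * real t \<le> real (card B)" using t4
      by (metis mult.commute of_nat_le_iff of_nat_mult of_nat_numeral)
    ultimately have "real M * real (card X) \<le> real (card B)"
    proof -
      assume h1: "4 * real M * F \<le> real (card B)" and h2: "4 * real M * real t \<le> real (card B)"
      have "real M * real (card X) \<le> real M * (2 * real t + 2 * F)" by (rule mult_left_mono[OF cX]) simp
      also have "\<dots> = (4 * real M * real t) / 2 + (4 * real M * F) / 2" by (simp add: algebra_simps)
      also have "\<dots> \<le> real (card B)" using h1 h2 by linarith
      finally show ?thesis .
    qed
    then have MX: "M * card X \<le> card B" by (metis of_nat_le_iff of_nat_mult)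
    define Y where "Y = B - X"
    have YV: "Y \<subseteq> V" using Y_def BV by auto
    have XY: "X \<inter> Y = {}" using Y_def by auto
    have domY: "\<forall>y\<in>Y. 2 \<le> card (nbrs G y \<inter> X)" using X(3) Y_def by auto
    have Xne: "X \<noteq> {}" using X(3) b by fastforce
    have fX: "finite X" using X(1) fV finite_subset by blast
    have cXpos: "0 < card X" using Xne fX by (simp add: card_gt_0_iff)
    have "card B - card X \<le> card Y" unfolding Y_def by (rule diff_card_le_card_Diff[OF fX])
    moreover have "c * card X + card X \<le> card B" using MX M1 by (simp add: algebra_simps)
    ultimately have "c * card X \<le> card Y" by linarith
    moreover have "(s - 1) * k * card X < c * card X" using skc cXpos by simp
    ultimately have "(s - 1) * k * card X < card Y" by linarith
    then show ?thesis
      using main_lemma[OF wf, of X Y s k] X(1) YV XY domY V_def by blast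
  qed
qed



lemma iso_struct:
  assumes wf1: "wf_graph G1" and wf2: "wf_graph G2"
    and bij: "bij_betw f (verts G1) (verts G2)"
    and ed: "\<forall>u\<in>verts G1. \<forall>v\<in>verts G1. {u, v} \<in> edges G1 \<longleftrightarrow> {f u, f v} \<in> edges G2"
  shows "verts G2 = f ` verts G1" "edges G2 = (\<lambda>e. f ` e) ` edges G1"
proof -
  show V: "verts G2 = f ` verts G1" using bij by (simp add: bij_betw_def)
  show "edges G2 = (\<lambda>e. f ` e) ` edges G1"
  proof
    show "edges G2 \<subseteq> (\<lambda>e. f ` e) ` edges G1"
    proof
      fix e assume e: "e \<in> edges G2"
      then obtain a b where ab: "e = {a, b}" "a \<in> verts G2" "b \<in> verts G2"
        using wf2 unfolding wf_graph_def by blast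
      then obtain u v where uv: "u \<in> verts G1" "v \<in> verts G1" "a = f u" "b = f v" using V by auto
      then have "{u, v} \<in> edges G1" using ed e ab by auto
      moreover have "e = f ` {u, v}" using ab uv by auto
      ultimately show "e \<in> (\<lambda>e. f ` e) ` edges G1" by blast
    qed
    show "(\<lambda>e. f ` e) ` edges G1 \<subseteq> edges G2"
    proof
      fix e assume "e \<in> (\<lambda>e. f ` e) ` edges G1"
      then obtain e1 where e1: "e1 \<in> edges G1" "e = f ` e1" by auto
      then obtain u v where uv: "e1 = {u, v}" "u \<in> verts G1" "v \<in> verts G1"
        using wf1 unfolding wf_graph_def by blast
      then have "{f u, f v} \<in> edges G2" using ed e1 by auto
      then show "e \<in> edges G2" using e1 uv by simp
    qed
  qed
qed

lemma iso_K2s: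
  assumes wf1: "wf_graph G1" and wf2: "wf_graph G2" and iso: "graph_iso G1 G2"
    and K: "is_K2s s G1"
  shows "is_K2s s G2"
proof -
  obtain f where bij: "bij_betw f (verts G1) (verts G2)"
    and ed: "\<forall>u\<in>verts G1. \<forall>v\<in>verts G1. {u, v} \<in> edges G1 \<longleftrightarrow> {f u, f v} \<in> edges G2"
    using iso unfolding graph_iso_def by blast
  note st = iso_struct[OF wf1 wf2 bij ed]
  obtain A B where AB: "verts G1 = A \<union> B" "A \<inter> B = {}" "card A = 2" "finite B" "card B = s"
    "edges G1 = {{a, b} | a b. a \<in> A \<and> b \<in> B}"
    using K unfolding is_K2s_def by blast
  have inj: "inj_on f (A \<union> B)" using bij AB(1) by (simp add: bij_betw_def)
  show ?thesis unfolding is_K2s_def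
  proof (rule exI[of _ "f ` A"], rule exI[of _ "f ` B"], intro conjI)
    show "verts G2 = f ` A \<union> f ` B" using st(1) AB(1) by auto
    show "f ` A \<inter> f ` B = {}" using inj AB(2) by (auto simp: inj_on_def)
    show "card (f ` A) = 2" using inj AB(3) by (metis card_image inj_on_Un)
    show "finite (f ` B)" using AB(4) by simp
    show "card (f ` B) = s" using inj AB(5) by (metis card_image inj_on_Un)
    show "edges G2 = {{a, b} |a b. a \<in> f ` A \<and> b \<in> f ` B}"
      unfolding st(2) AB(6)
    proof (rule set_eqI, rule iffI)
      fix x assume "x \<in> (\<lambda>e. f ` e) ` {{a, b} |a b. a \<in> A \<and> b \<in> B}"
      then show "x \<in> {{a, b} |a b. a \<in> f ` A \<and> b \<in> f ` B}" by auto
    next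
      fix x assume "x \<in> {{a, b} |a b. a \<in> f ` A \<and> b \<in> f ` B}"
      then obtain a b where ab: "a \<in> A" "b \<in> B" "x = {f a, f b}" by auto
      then have "x = f ` {a, b}" by simp
      moreover have "{a, b} \<in> {{a, b} |a b. a \<in> A \<and> b \<in> B}" using ab by auto
      ultimately show "x \<in> (\<lambda>e. f ` e) ` {{a, b} |a b. a \<in> A \<and> b \<in> B}" by blast
    qed
  qed
qed

lemma iso_subdiv:
  assumes wf1: "wf_graph G1" and wf2: "wf_graph G2" and iso: "graph_iso G1 G2"
    and Sd: "is_subdivision_of G1 H"
  shows "is_subdivision_of G2 H"
proof -
  obtain f where bij: "bij_betw f (verts G1) (verts G2)"
    and ed: "\<forall>u\<in>verts G1. \<forall>v\<in>verts G1. {u, v} \<in> edges G1 \<longleftrightarrow> {f u, f v} \<in> edges G2"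
    using iso unfolding graph_iso_def by blast
  note st = iso_struct[OF wf1 wf2 bij ed]
  obtain f0 g0 where fg: "inj_on f0 (verts H)" "inj_on g0 (edges H)"
      "f0 ` verts H \<inter> g0 ` edges H = {}" "verts G1 = f0 ` verts H \<union> g0 ` edges H"
      "edges G1 = {{f0 u, g0 e} | u e. e \<in> edges H \<and> u \<in> e}"
    using Sd unfolding is_subdivision_of_def by (elim exE conjE) (rule that, assumption+)
  have inj: "inj_on f (verts G1)" using bij by (simp add: bij_betw_def)
  show ?thesis unfolding is_subdivision_of_def
  proof (intro exI[of _ "f \<circ> f0"] exI[of _ "f \<circ> g0"] conjI)
    have i1: "inj_on f (f0 ` verts H)" using fg(4) inj by (rule_tac inj_on_subset) auto
    have i2: "inj_on f (g0 ` edges H)" using fg(4) inj by (rule_tac inj_on_subset) auto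
    show "inj_on (f \<circ> f0) (verts H)" using fg(1) i1 by (rule comp_inj_on)
    show "inj_on (f \<circ> g0) (edges H)" using fg(2) i2 by (rule comp_inj_on)
    show "(f \<circ> f0) ` verts H \<inter> (f \<circ> g0) ` edges H = {}"
    proof -
      have "(f \<circ> f0) ` verts H \<inter> (f \<circ> g0) ` edges H = f ` (f0 ` verts H) \<inter> f ` (g0 ` edges H)"
        by (simp add: image_comp)
      also have "\<dots> = f ` (f0 ` verts H \<inter> g0 ` edges H)"
        using inj fg(4) by (intro inj_on_image_Int[symmetric]) auto
      also have "\<dots> = {}" using fg(3) by simp
      finally show ?thesis .
    qed
    show "verts G2 = (f \<circ> f0) ` verts H \<union> (f \<circ> g0) ` edges H"
      using st(1) fg(4) by (simp add: image_Un image_comp)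
    show "edges G2 = {{(f \<circ> f0) u, (f \<circ> g0) e} |u e. e \<in> edges H \<and> u \<in> e}"
      unfolding st(2) fg(5)
    proof (rule set_eqI, rule iffI)
      fix x assume "x \<in> (\<lambda>e. f ` e) ` {{f0 u, g0 e} |u e. e \<in> edges H \<and> u \<in> e}"
      then show "x \<in> {{(f \<circ> f0) u, (f \<circ> g0) e} |u e. e \<in> edges H \<and> u \<in> e}" by auto
    next
      fix x assume "x \<in> {{(f \<circ> f0) u, (f \<circ> g0) e} |u e. e \<in> edges H \<and> u \<in> e}"
      then obtain u e where ue: "e \<in> edges H" "u \<in> e" "x = {f (f0 u), f (g0 e)}" by auto
      then have "x = f ` {f0 u, g0 e}" by simp
      moreover have "{f0 u, g0 e} \<in> {{f0 u, g0 e} |u e. e \<in> edges H \<and> u \<in> e}" using ue by auto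
      ultimately show "x \<in> (\<lambda>e. f ` e) ` {{f0 u, g0 e} |u e. e \<in> edges H \<and> u \<in> e}" by blast
    qed
  qed
qed



lemma K2s_not_sd:
  assumes wf: "wf_graph G" and K: "is_K2s (d + 1) G"
  shows "\<not> strongly_degenerate d G"
proof
  assume sd: "strongly_degenerate d G"
  obtain A B where AB: "verts G = A \<union> B" "A \<inter> B = {}" "card A = 2" "finite B" "card B = d + 1"
    "edges G = {{a, b} | a b. a \<in> A \<and> b \<in> B}"
    using K unfolding is_K2s_def by (elim exE conjE) (rule that, assumption+)
  have nA: "nbrs G v = B" if "v \<in> A" for v
    using that AB(2,6) unfolding nbrs_def by (auto simp: doubleton_eq_iff)
  have nB: "nbrs G v = A" if "v \<in> B" for v
    using that AB(2,6) unfolding nbrs_def by (auto simp: doubleton_eq_iff)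
  have Ane: "A \<noteq> {}" using AB(3) by auto
  then have "verts G \<noteq> {}" using AB(1) by auto
  then obtain v where v: "v \<in> verts G" "removable d G v"
    using sd subgraph_refl[OF wf] unfolding strongly_degenerate_def by blast
  have dA: "degree G a = d + 1" if "a \<in> A" for a using nA[OF that] AB(5) degree_def by simp
  show False
  proof (cases "v \<in> A")
    case True
    then show False using v(2) dA unfolding removable_def by simp
  next
    case False
    then have vB: "v \<in> B" using v(1) AB(1) by auto
    have "{w \<in> nbrs G v. degree G w > d} = A" using nB[OF vB] dA by auto
    then show False using v(2) AB(3) unfolding removable_def by simp
  qed
qed

lemma subdiv_not_sd:
  assumes wfH: "wf_graph H" and wfS: "wf_graph S" and md: "min_degree_at_least (d + 1) H"
    and Sd: "is_subdivision_of S H"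
  shows "\<not> strongly_degenerate d S"
proof
  assume sd: "strongly_degenerate d S"
  obtain f g where fg: "inj_on f (verts H)" "inj_on g (edges H)"
      "f ` verts H \<inter> g ` edges H = {}" "verts S = f ` verts H \<union> g ` edges H"
      "edges S = {{f u, g e} | u e. e \<in> edges H \<and> u \<in> e}"
    using Sd unfolding is_subdivision_of_def by (elim exE conjE) (rule that, assumption+)
  have eV: "e \<subseteq> verts H" if "e \<in> edges H" for e using wf_edges_sub[OF wfH] that by auto
  have nf: "nbrs S (f u) = g ` {e \<in> edges H. u \<in> e}" if u: "u \<in> verts H" for u
  proof (rule set_eqI, rule iffI)
    fix x assume "x \<in> nbrs S (f u)"
    then obtain u' e where ue: "{f u, x} = {f u', g e}" "e \<in> edges H" "u' \<in> e"
      unfolding nbrs_def fg(5) by auto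
    have u'V: "u' \<in> verts H" using ue eV by auto
    have "f u \<noteq> g e" using fg(3) u ue(2) by auto
    then have "f u = f u' \<and> x = g e" using ue(1) by (auto simp: doubleton_eq_iff)
    then have "u = u'" "x = g e" using fg(1) u u'V by (auto simp: inj_on_def)
    then show "x \<in> g ` {e \<in> edges H. u \<in> e}" using ue by auto
  next
    fix x assume "x \<in> g ` {e \<in> edges H. u \<in> e}"
    then obtain e where "e \<in> edges H" "u \<in> e" "x = g e" by auto
    then show "x \<in> nbrs S (f u)" unfolding nbrs_def fg(5) by blast
  qed
  have ng: "nbrs S (g e) = f ` e" if e: "e \<in> edges H" for e
  proof (rule set_eqI, rule iffI)
    fix x assume "x \<in> nbrs S (g e)"
    then obtain u e' where ue: "{g e, x} = {f u, g e'}" "e' \<in> edges H" "u \<in> e'"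
      unfolding nbrs_def fg(5) by auto
    have "f u \<noteq> g e" using fg(3) ue eV e by blast
    then have "g e = g e' \<and> x = f u" using ue(1) by (auto simp: doubleton_eq_iff)
    then have "e = e'" "x = f u" using fg(2) e ue(2) by (auto simp: inj_on_def)
    then show "x \<in> f ` e" using ue by auto
  next
    fix x assume "x \<in> f ` e"
    then obtain u where "u \<in> e" "x = f u" by auto
    then show "x \<in> nbrs S (g e)" unfolding nbrs_def fg(5) using e by (auto simp: insert_commute)
  qed
  have degH: "card {e \<in> edges H. u \<in> e} = degree H u" if u: "u \<in> verts H" for u
  proof -
    have "{e \<in> edges H. u \<in> e} = (\<lambda>w. {u, w}) ` nbrs H u"
    proof (rule set_eqI, rule iffI)
      fix e assume "e \<in> {e \<in> edges H. u \<in> e}"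
      then have e: "e \<in> edges H" "u \<in> e" by auto
      then obtain a b where "a \<noteq> b" "e = {a, b}" using wfH unfolding wf_graph_def by blast
      then show "e \<in> (\<lambda>w. {u, w}) ` nbrs H u" using e unfolding nbrs_def
        by (auto simp: insert_commute)
    next
      fix e assume "e \<in> (\<lambda>w. {u, w}) ` nbrs H u"
      then show "e \<in> {e \<in> edges H. u \<in> e}" unfolding nbrs_def by auto
    qed
    moreover have "inj_on (\<lambda>w. {u, w}) (nbrs H u)"
      by (rule inj_onI) (auto simp: doubleton_eq_iff)
    ultimately show ?thesis unfolding degree_def by (simp add: card_image)
  qed
  have degf: "d < degree S (f u)" if u: "u \<in> verts H" for u
  proof -
    have "{e \<in> edges H. u \<in> e} \<subseteq> edges H" by auto
    then have "inj_on g {e \<in> edges H. u \<in> e}" using fg(2) inj_on_subset by blast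
    then have "degree S (f u) = degree H u"
      unfolding degree_def nf[OF u] using degH[OF u] by (simp add: card_image degree_def)
    moreover have "d + 1 \<le> degree H u" using md u unfolding min_degree_at_least_def by blast
    ultimately show ?thesis by simp
  qed
  have "verts H \<noteq> {}" using md unfolding min_degree_at_least_def by simp
  then have "verts S \<noteq> {}" using fg(4) by auto
  then obtain v where v: "v \<in> verts S" "removable d S v"
    using sd subgraph_refl[OF wfS] unfolding strongly_degenerate_def by blast
  show False
  proof (cases "v \<in> f ` verts H")
    case True
    then obtain u where "u \<in> verts H" "v = f u" by auto
    then show False using v(2) degf unfolding removable_def by fastforce
  next
    case False
    then obtain e where e: "e \<in> edges H" "v = g e" using v(1) fg(4) by auto
    obtain a b where ab: "a \<noteq> b" "e = {a, b}" "a \<in> verts H" "b \<in> verts H"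
      using wfH e(1) unfolding wf_graph_def by blast
    have "f a \<noteq> f b" using fg(1) ab by (auto simp: inj_on_def)
    have "{w \<in> nbrs S v. degree S w > d} = {f a, f b}"
      using ng[OF e(1)] e(2) ab degf by auto
    then show False using v(2) \<open>f a \<noteq> f b\<close> unfolding removable_def by simp
  qed
qed

theorem theorem1p2:
  assumes "subgraph_closed \<G>"
  shows "(\<exists>d::nat. d \<ge> 1 \<and> (\<forall>G\<in>\<G>. strongly_degenerate d G)) \<longleftrightarrow>
         (\<exists>s k :: nat. \<not> (\<exists>G\<in>\<G>. is_K2s s G) \<and>
            (\<forall>H S. wf_graph H \<and> min_degree_at_least k H \<and> is_subdivision_of S H \<longrightarrow> S \<notin> \<G>))"
proof
  have wfG: "\<And>G. G \<in> \<G> \<Longrightarrow> wf_graph G" using assms unfolding subgraph_closed_def by blast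
  assume "\<exists>d::nat. d \<ge> 1 \<and> (\<forall>G\<in>\<G>. strongly_degenerate d G)"
  then obtain d where d: "\<forall>G\<in>\<G>. strongly_degenerate d G" by blast
  show "\<exists>s k :: nat. \<not> (\<exists>G\<in>\<G>. is_K2s s G) \<and>
            (\<forall>H S. wf_graph H \<and> min_degree_at_least k H \<and> is_subdivision_of S H \<longrightarrow> S \<notin> \<G>)"
  proof (intro exI[of _ "d + 1"] conjI allI impI)
    show "\<not> (\<exists>G\<in>\<G>. is_K2s (d + 1) G)" using K2s_not_sd wfG d by blast
    fix H S assume "wf_graph H \<and> min_degree_at_least (d + 1) H \<and> is_subdivision_of S H"
    then show "S \<notin> \<G>" using subdiv_not_sd wfG d by blast
  qed
next
  have wfG: "\<And>G. G \<in> \<G> \<Longrightarrow> wf_graph G" using assms unfolding subgraph_closed_def by blast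
  have cl: "\<And>G G'. G \<in> \<G> \<Longrightarrow> subgraph G' G \<Longrightarrow> \<exists>G''\<in>\<G>. graph_iso G' G''"
    using assms unfolding subgraph_closed_def by blast
  assume "\<exists>s k :: nat. \<not> (\<exists>G\<in>\<G>. is_K2s s G) \<and>
            (\<forall>H S. wf_graph H \<and> min_degree_at_least k H \<and> is_subdivision_of S H \<longrightarrow> S \<notin> \<G>)"
  then obtain s k where noK: "\<not> (\<exists>G\<in>\<G>. is_K2s s G)"
    and noS: "\<forall>H S. wf_graph H \<and> min_degree_at_least k H \<and> is_subdivision_of S H \<longrightarrow> S \<notin> \<G>"
    by blast
  define M where "M = s * k + 2"
  define d where "d = 32 * M^3 + 4 * M^2"
  have "0 < M" using M_def by simp
  then have "0 < M^2" by simp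
  then have d1: "1 \<le> d" unfolding d_def by linarith
  have "\<forall>G\<in>\<G>. strongly_degenerate d G"
  proof
    fix G assume G: "G \<in> \<G>"
    show "strongly_degenerate d G" unfolding strongly_degenerate_def
    proof (intro allI impI)
      fix G' assume G': "subgraph G' G \<and> verts G' \<noteq> {}"
      have wf': "wf_graph G'" using G' subgraph_def by blast
      show "\<exists>v\<in>verts G'. removable d G' v"
      proof (rule ccontr)
        assume "\<not> (\<exists>v\<in>verts G'. removable d G' v)"
        then have nr: "\<forall>v\<in>verts G'. \<not> removable d G' v" by blast
        from core[OF wf' conjunct2[OF G'] nr M_def d_def]
        show False
        proof
          assume "\<exists>K. subgraph K G' \<and> is_K2s s K"
          then obtain K where K: "subgraph K G'" "is_K2s s K" by blast
          have "subgraph K G" using K(1) G' subgraph_trans by blast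
          then obtain G'' where G'': "G'' \<in> \<G>" "graph_iso K G''" using cl G by blast
          have "is_K2s s G''"
            using iso_K2s[OF _ wfG[OF G''(1)] G''(2) K(2)] K(1) subgraph_def by blast
          then show False using noK G''(1) by blast
        next
          assume "\<exists>H S. wf_graph H \<and> min_degree_at_least k H \<and> is_subdivision_of S H \<and> subgraph S G'"
          then obtain H S where HS: "wf_graph H" "min_degree_at_least k H" "is_subdivision_of S H"
            "subgraph S G'" by blast
          have "subgraph S G" using HS(4) G' subgraph_trans by blast
          then obtain G'' where G'': "G'' \<in> \<G>" "graph_iso S G''" using cl G by blast
          have "is_subdivision_of G'' H"
            using iso_subdiv[OF _ wfG[OF G''(1)] G''(2) HS(3)] HS(4) subgraph_def by blast
          then show False using noS HS(1,2) G''(1) by blast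
        qed
      qed
    qed
  qed
  then show "\<exists>d::nat. d \<ge> 1 \<and> (\<forall>G\<in>\<G>. strongly_degenerate d G)" using d1 by blast
qed

end
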